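(* Let $E$ and $F$ be Banach spaces and $M>0$. If $d_N(E,F)<M^2$, then there exist a constant $L\ge 0$ and a bijective coarse $(M,L)$-quasi isometry $T:E\to F$.
   Context: A subset $N$ of a metric space $E$ is an $(\varepsilon,\delta)$-net if every point of $E$ is at distance less than $\varepsilon$ from some point of $N$ and any two distinct points of $N$ are at distance at least $\delta$; a net is an $(\varepsilon,\delta)$-net for some $\varepsilon,\delta>0$. For a Lipschitz map $T$, $l(T)=\sup\{d(Tx,Ty)/d(x,y):x\ne y\}$. The net distance $d_N(E,F)$ is the infimum of $l(T)\,l(T^{-1})$ over all bijections $T:N_E\to N_F$ between nets $N_E\subset E$, $N_F\subset F$ with $T,T^{-1}$ Lipschitz. A map $T:E\to F$ is a coarse $(M,L)$-quasi isometry if $\frac{1}{M}\|x-y\|-L\le\|Tx-Ty\|\le M\|x-y\|+L$ for all $x,y\in E$ and $T(E)$ is $\xi$-dense in $F$ for some $\xi>0$ (every point of $F$ is within distance $\xi$ of $T(E)$). *)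

theory Defs
  imports "HOL-Analysis.Analysis"
begin

definition is_net_eps_delta :: "'a::metric_space set \<Rightarrow> real \<Rightarrow> real \<Rightarrow> 'a set \<Rightarrow> bool" where
  "is_net_eps_delta E \<epsilon> \<delta> N \<longleftrightarrow> N \<subseteq> E \<and>
     (\<forall>x\<in>E. \<exists>n\<in>N. dist x n < \<epsilon>) \<and>
     (\<forall>n\<in>N. \<forall>m\<in>N. n \<noteq> m \<longrightarrow> dist n m \<ge> \<delta>)"

definition is_net :: "'a::metric_space set \<Rightarrow> 'a set \<Rightarrow> bool" where
  "is_net E N \<longleftrightarrow> (\<exists>\<epsilon>>0. \<exists>\<delta>>0. is_net_eps_delta E \<epsilon> \<delta> N)"

definition lip_const :: "'a::metric_space set \<Rightarrow> ('a \<Rightarrow> 'b::metric_space) \<Rightarrow> real" where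
  "lip_const N T =
     (let R = {dist (T x) (T y) / dist x y | x y. x \<in> N \<and> y \<in> N \<and> x \<noteq> y}
      in if R = {} then 0 else Sup R)"

text \<open>Net distance d_N(E,F), valued in the extended reals (infimum of the empty set is +infinity).\<close>
definition net_distance :: "'a::metric_space set \<Rightarrow> 'b::metric_space set \<Rightarrow> ereal" where
  "net_distance E F = Inf {ereal (lip_const NE T * lip_const NF (inv_into NE T)) | NE NF T.
      is_net E NE \<and> is_net F NF \<and> bij_betw T NE NF \<and>
      (\<exists>C. C-lipschitz_on NE T) \<and> (\<exists>C. C-lipschitz_on NF (inv_into NE T))}"

definition coarse_quasi_isometry ::
  "real \<Rightarrow> real \<Rightarrow> ('a::real_normed_vector \<Rightarrow> 'b::real_normed_vector) \<Rightarrow> 'a set \<Rightarrow> 'b set \<Rightarrow> bool" where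
  "coarse_quasi_isometry M L T E F \<longleftrightarrow> T ` E \<subseteq> F \<and>
     (\<forall>x\<in>E. \<forall>y\<in>E. (1/M) * norm (x - y) - L \<le> norm (T x - T y) \<and>
                   norm (T x - T y) \<le> M * norm (x - y) + L) \<and>
     (\<exists>\<xi>>0. \<forall>y\<in>F. \<exists>x\<in>E. dist y (T x) \<le> \<xi>)"

end

theory Submission
  imports Defs "HOL-Library.Equipollence"
begin

definition sig :: "'a::real_normed_vector \<Rightarrow> 'a" where "sig y = y /\<^sub>R (1 + norm y)"

lemma sig_norm: "norm (sig y) < 1"
proof -
  have "0 < 1 + norm y" using add_pos_nonneg[OF zero_less_one norm_ge_zero] .
  thus ?thesis by (simp add: sig_def divide_simps)
qed

lemma sig_lip: "norm (sig y - sig z) \<le> 2 * norm (y - z)"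
proof -
  define a where "a = norm y" define b where "b = norm z"
  have a0: "a \<ge> 0" and b0: "b \<ge> 0" by (auto simp: a_def b_def)
  have co: "1/(1+a) - 1/(1+b) = (b - a) / ((1+a)*(1+b))"
    using a0 b0 by (simp add: divide_simps)
  have "sig y - sig z = (1/(1+a)) *\<^sub>R y - (1/(1+b)) *\<^sub>R z"
    by (simp add: sig_def a_def b_def divide_inverse)
  also have "\<dots> = (1/(1+a)) *\<^sub>R (y - z) + (1/(1+a) - 1/(1+b)) *\<^sub>R z"
    by (simp add: algebra_simps)
  finally have "sig y - sig z = (y - z) /\<^sub>R (1+a) + ((b - a) / ((1+a)*(1+b))) *\<^sub>R z"
    using co by (simp add: divide_inverse)
  hence "norm (sig y - sig z) \<le> norm ((y - z) /\<^sub>R (1+a)) + norm (((b - a) / ((1+a)*(1+b))) *\<^sub>R z)"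
    by (metis norm_triangle_ineq)
  also have "norm ((y - z) /\<^sub>R (1+a)) \<le> norm (y - z)"
    using a0 by (simp add: divide_simps) (simp add: distrib_left)
  also have "norm (((b - a) / ((1+a)*(1+b))) *\<^sub>R z) = \<bar>b - a\<bar> / ((1+a)*(1+b)) * b"
    using a0 b0 by (simp add: b_def abs_mult)
  also have "\<dots> \<le> \<bar>b - a\<bar>"
  proof -
    have "b \<le> (1+a)*(1+b)" using a0 b0 mult_nonneg_nonneg[OF a0 b0] by (simp add: algebra_simps)
    hence "\<bar>b - a\<bar> * b \<le> \<bar>b - a\<bar> * ((1+a)*(1+b))" by (simp add: mult_left_mono)
    moreover have "(1+a)*(1+b) > 0" using a0 b0 by simp
    ultimately show ?thesis by (simp add: divide_simps mult.commute)
  qed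
  also have "\<bar>b - a\<bar> \<le> norm (y - z)"
    unfolding a_def b_def by (metis norm_triangle_ineq3 norm_minus_commute abs_minus_commute)
  finally show ?thesis by simp
qed

lemma sig_inj: "inj sig"
proof (rule injI)
  fix y z :: 'a assume h: "sig y = sig z"
  hence "norm (sig y) = norm (sig z)" by simp
  have p1: "1 + norm y > 0" "1 + norm z > 0" using add_pos_nonneg[OF zero_less_one norm_ge_zero] by auto
  have "norm y / (1 + norm y) = norm z / (1 + norm z)" using \<open>norm (sig y) = norm (sig z)\<close> p1 by (simp add: sig_def divide_inverse mult.commute)
  hence "norm y * (1 + norm z) = norm z * (1 + norm y)"
    using p1 by (simp add: divide_simps)
  hence "norm y = norm z" by (simp add: algebra_simps)
  thus "y = z" using h unfolding sig_def
    using p1 by (simp add: divide_simps)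
qed

lemma sig_cont: "continuous_on UNIV sig"
  unfolding sig_def by (intro continuous_intros) (metis add_pos_nonneg[OF zero_less_one norm_ge_zero] less_irrefl)


primrec ifs :: "real \<Rightarrow> nat \<Rightarrow> (nat \<Rightarrow> 'a::real_normed_vector) \<Rightarrow> 'a" where
  "ifs r 0 s = 0"
| "ifs r (Suc K) s = r *\<^sub>R sig (s 0 + ifs r K (\<lambda>k. s (Suc k)))"

lemma ifs_diff:
  assumes "0 \<le> r"
  shows "norm (ifs r (Suc K) s - ifs r K s) \<le> r * (2*r)^K"
proof (induction K arbitrary: s)
  case 0
  show ?case using assms sig_norm[of "s 0"] by (simp add: less_imp_le mult_left_le)
next
  case (Suc K)
  let ?t = "\<lambda>k. s (Suc k)"
  have "norm (ifs r (Suc (Suc K)) s - ifs r (Suc K) s)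
      = r * norm (sig (s 0 + ifs r (Suc K) ?t) - sig (s 0 + ifs r K ?t))"
    using assms by (simp add: scaleR_diff_right[symmetric])
  also have "\<dots> \<le> r * (2 * norm (ifs r (Suc K) ?t - ifs r K ?t))"
    using assms sig_lip[of "s 0 + ifs r (Suc K) ?t" "s 0 + ifs r K ?t"]
    by (intro mult_left_mono) auto
  also have "\<dots> \<le> r * (2 * (r * (2*r)^K))"
    using assms Suc[of ?t] by (intro mult_left_mono) auto
  finally show ?case by (simp add: algebra_simps)
qed

definition ifsG :: "real \<Rightarrow> (nat \<Rightarrow> 'a::banach) \<Rightarrow> 'a" where
  "ifsG r s = suminf (\<lambda>j. ifs r (Suc j) s - ifs r j s)"

lemma ifs_lim:
  assumes "0 \<le> r" "r \<le> 1/4"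
  shows "(\<lambda>K. ifs r K s) \<longlonglongrightarrow> ifsG r s"
proof -
  have gs: "summable (\<lambda>j. r * (2*r)^j)"
    using assms by (intro summable_mult summable_geometric) auto
  have "summable (\<lambda>j. ifs r (Suc j) s - ifs r j s)"
    by (rule summable_comparison_test'[OF gs, of 0]) (use ifs_diff[OF assms(1)] in auto)
  from summable_LIMSEQ[OF this]
  have "(\<lambda>n. \<Sum>i<n. ifs r (Suc i) s - ifs r i s) \<longlonglongrightarrow> ifsG r s" unfolding ifsG_def .
  moreover have "(\<lambda>n. \<Sum>i<n. ifs r (Suc i) s - ifs r i s) = (\<lambda>n. ifs r n s)"
    using sum_lessThan_telescope[of "\<lambda>i. ifs r i s"] by simp
  ultimately show ?thesis by simp
qed

lemma ifsG_eq:
  assumes "0 \<le> r" "r \<le> 1/4"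
  shows "ifsG r s = r *\<^sub>R sig (s 0 + ifsG r (\<lambda>k. s (Suc k)))"
proof -
  let ?t = "\<lambda>k. s (Suc k)"
  have 1: "(\<lambda>K. ifs r (Suc K) s) \<longlonglongrightarrow> ifsG r s"
    using ifs_lim[OF assms] by (rule LIMSEQ_Suc)
  have "(\<lambda>K. s 0 + ifs r K ?t) \<longlonglongrightarrow> s 0 + ifsG r ?t"
    using ifs_lim[OF assms] by (intro tendsto_intros)
  hence "(\<lambda>K. sig (s 0 + ifs r K ?t)) \<longlonglongrightarrow> sig (s 0 + ifsG r ?t)"
    using sig_cont continuous_on_eq_continuous_at[OF open_UNIV, of sig]
    by (intro isCont_tendsto_compose[where g=sig]) auto
  hence "(\<lambda>K. r *\<^sub>R sig (s 0 + ifs r K ?t)) \<longlonglongrightarrow> r *\<^sub>R sig (s 0 + ifsG r ?t)"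
    by (intro tendsto_intros)
  hence "(\<lambda>K. ifs r (Suc K) s) \<longlonglongrightarrow> r *\<^sub>R sig (s 0 + ifsG r ?t)" by simp
  with 1 show ?thesis using LIMSEQ_unique by blast
qed

lemma ifsG_norm:
  assumes "0 \<le> r" "r \<le> 1/4"
  shows "norm (ifsG r s) \<le> r"
  using ifsG_eq[OF assms, of s] assms mult_left_le[OF less_imp_le[OF sig_norm] assms(1)]
  by simp

lemma ifsG_inj:
  fixes N :: "'a::banach set"
  assumes sep: "\<forall>n\<in>N. \<forall>m\<in>N. n \<noteq> m \<longrightarrow> dist n m \<ge> \<delta>"
    and r: "0 < r" "r \<le> 1/4" "2 * r < \<delta>"
  shows "inj_on (ifsG r) {s. \<forall>k. s k \<in> N}"
proof -
  have step: "s 0 = s' 0 \<and> ifsG r (\<lambda>k. s (Suc k)) = ifsG r (\<lambda>k. s' (Suc k))"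
    if "\<forall>k. s k \<in> N" "\<forall>k. s' k \<in> N" "ifsG r s = ifsG r s'" for s s'
  proof -
    let ?a = "ifsG r (\<lambda>k. s (Suc k))" and ?b = "ifsG r (\<lambda>k. s' (Suc k))"
    have "r *\<^sub>R sig (s 0 + ?a) = r *\<^sub>R sig (s' 0 + ?b)"
      using that(3) ifsG_eq[of r s] ifsG_eq[of r s'] r by simp
    hence "sig (s 0 + ?a) = sig (s' 0 + ?b)" using r by simp
    hence e: "s 0 + ?a = s' 0 + ?b" by (rule injD[OF sig_inj])
    have "s 0 - s' 0 = (s 0 + ?a) - (s' 0 + ?a)" by simp
    also have "\<dots> = (s' 0 + ?b) - (s' 0 + ?a)" using e by simp
    also have "\<dots> = ?b - ?a" by simp
    finally have "dist (s 0) (s' 0) = norm (?b - ?a)" by (simp add: dist_norm)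
    also have "\<dots> \<le> norm ?b + norm ?a" by (rule norm_triangle_ineq4)
    also have "\<dots> \<le> 2 * r" using ifsG_norm[of r "\<lambda>k. s (Suc k)"] ifsG_norm[of r "\<lambda>k. s' (Suc k)"] r by linarith
    finally have dd: "dist (s 0) (s' 0) \<le> 2 * r" .
    have "s 0 = s' 0"
    proof (rule ccontr)
      assume "s 0 \<noteq> s' 0"
      hence "dist (s 0) (s' 0) \<ge> \<delta>" using sep that(1,2) by blast
      thus False using dd r by linarith
    qed
    thus ?thesis using e by simp
  qed
  have "\<forall>s s'. (\<forall>k. s k \<in> N) \<longrightarrow> (\<forall>k. s' k \<in> N) \<longrightarrow> ifsG r s = ifsG r s' \<longrightarrow> s k = s' k" for k
  proof (induction k)
    case 0 then show ?case using step by blast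
  next
    case (Suc k)
    show ?case
    proof (intro allI impI)
      fix s s' :: "nat \<Rightarrow> 'a" assume h: "\<forall>k. s k \<in> N" "\<forall>k. s' k \<in> N" "ifsG r s = ifsG r s'"
      from step[OF h] have "ifsG r (\<lambda>k. s (Suc k)) = ifsG r (\<lambda>k. s' (Suc k))" by blast
      with Suc[rule_format, of "\<lambda>k. s (Suc k)" "\<lambda>k. s' (Suc k)"] h
      show "s (Suc k) = s' (Suc k)" by auto
    qed
  qed
  thus ?thesis by (auto intro!: inj_onI)
qed


primrec remd :: "('a::real_normed_vector \<Rightarrow> 'a) \<Rightarrow> nat \<Rightarrow> 'a \<Rightarrow> 'a" where
  "remd p 0 x = x"
| "remd p (Suc k) x = 2 *\<^sub>R (remd p k x - p (remd p k x))"

lemma digits_inj: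
  fixes N :: "'a::real_normed_vector set"
  assumes dense: "\<forall>x. \<exists>n\<in>N. dist x n < \<epsilon>"
  shows "\<exists>D::'a \<Rightarrow> nat \<Rightarrow> 'a. (\<forall>x k. D x k \<in> N) \<and> inj D"
proof -
  define p where "p y = (SOME n. n \<in> N \<and> dist y n < \<epsilon>)" for y
  have p: "p y \<in> N \<and> dist y (p y) < \<epsilon>" for y
    unfolding p_def using someI_ex[of "\<lambda>n. n \<in> N \<and> dist y n < \<epsilon>"] dense by blast
  define D where "D x k = p (remd p k x)" for x k
  have "inj D"
  proof (rule injI)
    fix x y assume h: "D x = D y"
    have eq: "remd p k x - remd p k y = (2^k) *\<^sub>R (x - y)" for k
    proof (induction k)
      case 0 show ?case by simp
    next
      case (Suc k)
      have "p (remd p k x) = p (remd p k y)" using fun_cong[OF h, of k] by (simp add: D_def)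
      hence "remd p (Suc k) x - remd p (Suc k) y = 2 *\<^sub>R (remd p k x - remd p k y)"
        by (simp add: algebra_simps)
      also have "\<dots> = (2^Suc k) *\<^sub>R (x - y)" using Suc by simp
      finally show ?case .
    qed
    have bd: "norm (remd p (Suc k) z) \<le> 2 * \<epsilon>" for k z
      using p[of "remd p k z"] by (simp add: dist_norm)
    have le: "2^Suc k * norm (x - y) \<le> 4 * \<epsilon>" for k
    proof -
      have "2^Suc k * norm (x - y) = norm (remd p (Suc k) x - remd p (Suc k) y)"
        using eq[of "Suc k"] by simp
      also have "\<dots> \<le> norm (remd p (Suc k) x) + norm (remd p (Suc k) y)" by (rule norm_triangle_ineq4)
      also have "\<dots> \<le> 4 * \<epsilon>" using bd[of k x] bd[of k y] by simp
      finally show ?thesis .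
    qed
    show "x = y"
    proof (rule ccontr)
      assume "x \<noteq> y" hence d: "norm (x - y) > 0" by simp
      obtain k where "4 * \<epsilon> / norm (x - y) < 2 ^ k" using real_arch_pow[of 2] by fastforce
      hence "4 * \<epsilon> < 2^k * norm (x - y)" using d by (simp add: divide_simps)
      also have "\<dots> \<le> 2^Suc k * norm (x - y)" using d by simp
      finally show False using le[of k] by simp
    qed
  qed
  thus ?thesis using p by (intro exI[of _ D]) (simp add: D_def)
qed

lemma inj_between:
  fixes NE :: "'a::real_normed_vector set" and NF :: "'b::banach set"
  assumes dense: "\<forall>x. \<exists>n\<in>NE. dist x n < \<epsilon>"
    and sep: "\<forall>n\<in>NF. \<forall>m\<in>NF. n \<noteq> m \<longrightarrow> dist n m \<ge> \<delta>" and d: "\<delta> > 0"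
    and T: "bij_betw T NE NF"
  shows "\<exists>f::'a \<Rightarrow> 'b. inj f"
proof -
  obtain D :: "'a \<Rightarrow> nat \<Rightarrow> 'a" where D: "\<forall>x k. D x k \<in> NE" "inj D"
    using digits_inj[OF dense] by blast
  define r where "r = min (\<delta>/4) (1/4)"
  have r: "0 < r" "r \<le> 1/4" "2*r < \<delta>" using d unfolding r_def by auto
  have G: "inj_on (ifsG r) {s. \<forall>k. s k \<in> NF}" by (rule ifsG_inj[OF sep r])
  have "inj (\<lambda>x. ifsG r (\<lambda>k. T (D x k)))"
  proof (rule injI)
    fix x y assume "ifsG r (\<lambda>k. T (D x k)) = ifsG r (\<lambda>k. T (D y k))"
    moreover have "(\<lambda>k. T (D z k)) \<in> {s. \<forall>k. s k \<in> NF}" for z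
      using D(1) T by (auto simp: bij_betw_def)
    ultimately have "(\<lambda>k. T (D x k)) = (\<lambda>k. T (D y k))" using G by (auto dest: inj_onD)
    hence "D x k = D y k" for k using T D(1) unfolding bij_betw_def by (metis inj_onD)
    hence "D x = D y" by auto
    thus "x = y" using D(2) by (simp add: inj_eq)
  qed
  thus ?thesis by blast
qed

lemma sig_ball:
  assumes "\<rho> > 0"
  shows "m + \<rho> *\<^sub>R sig z \<in> ball m \<rho>"
proof -
  have "dist m (m + \<rho> *\<^sub>R sig z) = \<rho> * norm (sig z)" using assms by (simp add: dist_norm)
  also have "\<dots> < \<rho> * 1" using assms sig_norm[of z] by (intro mult_strict_left_mono) auto
  finally show ?thesis by simp
qed

lemma cell_bij:
  fixes A :: "'a::real_normed_vector set" and B :: "'b::real_normed_vector set"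
  assumes "ball n \<rho> \<subseteq> A" "\<rho> > 0" "ball m \<rho>' \<subseteq> B" "\<rho>' > 0"
    and f: "inj (f::'a \<Rightarrow> 'b)" and g: "inj (g::'b \<Rightarrow> 'a)"
  shows "\<exists>\<beta>. bij_betw \<beta> A B"
proof -
  have "A \<lesssim> B"
    unfolding lepoll_def
  proof (intro exI conjI)
    show "inj_on (\<lambda>x. m + \<rho>' *\<^sub>R sig (f x)) A"
    proof (rule inj_onI)
      fix x y assume "m + \<rho>' *\<^sub>R sig (f x) = m + \<rho>' *\<^sub>R sig (f y)"
      hence "sig (f x) = sig (f y)" using assms(4) by simp
      hence "f x = f y" by (rule injD[OF sig_inj])
      thus "x = y" by (rule injD[OF f])
    qed
    show "(\<lambda>x. m + \<rho>' *\<^sub>R sig (f x)) ` A \<subseteq> B"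
      using sig_ball[OF assms(4)] assms(3) by blast
  qed
  moreover have "B \<lesssim> A"
    unfolding lepoll_def
  proof (intro exI conjI)
    show "inj_on (\<lambda>x. n + \<rho> *\<^sub>R sig (g x)) B"
    proof (rule inj_onI)
      fix x y assume "n + \<rho> *\<^sub>R sig (g x) = n + \<rho> *\<^sub>R sig (g y)"
      hence "sig (g x) = sig (g y)" using assms(2) by simp
      hence "g x = g y" by (rule injD[OF sig_inj])
      thus "x = y" by (rule injD[OF g])
    qed
    show "(\<lambda>x. n + \<rho> *\<^sub>R sig (g x)) ` B \<subseteq> A"
      using sig_ball[OF assms(2)] assms(1) by blast
  qed
  ultimately have "A \<approx> B" by (rule lepoll_antisym)
  thus ?thesis unfolding eqpoll_def .
qed

lemma cells:
  fixes N :: "'a::real_normed_vector set"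
  assumes "is_net_eps_delta UNIV \<epsilon> \<delta> N" "\<epsilon> > 0" "\<delta> > 0"
  shows "\<exists>\<pi> \<rho>. \<rho> > 0 \<and> (\<forall>x. \<pi> x \<in> N \<and> dist x (\<pi> x) < \<epsilon>) \<and> (\<forall>n\<in>N. \<forall>x. dist x n < \<rho> \<longrightarrow> \<pi> x = n)"
proof -
  define \<rho> where "\<rho> = min (\<delta>/2) \<epsilon>"
  have dense: "\<forall>x. \<exists>n\<in>N. dist x n < \<epsilon>" and sep: "\<forall>n\<in>N. \<forall>m\<in>N. n \<noteq> m \<longrightarrow> dist n m \<ge> \<delta>"
    using assms(1) unfolding is_net_eps_delta_def by auto
  define \<pi> where "\<pi> x = (if \<exists>n\<in>N. dist x n < \<rho> then (SOME n. n \<in> N \<and> dist x n < \<rho>)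
      else (SOME n. n \<in> N \<and> dist x n < \<epsilon>))" for x
  have uniq: "n = n'" if "n \<in> N" "n' \<in> N" "dist x n < \<rho>" "dist x n' < \<rho>" for x n n'
  proof (rule ccontr)
    assume "n \<noteq> n'"
    hence "dist n n' \<ge> \<delta>" using sep that by auto
    moreover have "dist n n' \<le> dist x n + dist x n'" by (metis dist_commute dist_triangle)
    ultimately show False using that unfolding \<rho>_def by linarith
  qed
  have P1: "\<pi> x \<in> N \<and> dist x (\<pi> x) < \<epsilon>" for x
  proof (cases "\<exists>n\<in>N. dist x n < \<rho>")
    case True
    hence "(SOME n. n \<in> N \<and> dist x n < \<rho>) \<in> N \<and> dist x (SOME n. n \<in> N \<and> dist x n < \<rho>) < \<rho>"
      by (metis (mono_tags, lifting) someI_ex)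
    then show ?thesis using True unfolding \<pi>_def \<rho>_def by auto
  next
    case False
    then show ?thesis unfolding \<pi>_def using dense someI_ex[of "\<lambda>n. n \<in> N \<and> dist x n < \<epsilon>"] by auto
  qed
  have P2: "\<pi> x = n" if "n \<in> N" "dist x n < \<rho>" for n x
  proof -
    have "(SOME n. n \<in> N \<and> dist x n < \<rho>) \<in> N \<and> dist x (SOME n. n \<in> N \<and> dist x n < \<rho>) < \<rho>"
      using that by (metis (mono_tags, lifting) someI_ex)
    thus ?thesis using that uniq unfolding \<pi>_def by auto
  qed
  have "\<rho> > 0" using assms unfolding \<rho>_def by auto
  thus ?thesis using P1 P2 by blast
qed


lemma tri3:
  fixes a b c d :: "'a::real_normed_vector"
  shows "norm (a - b) \<le> norm (a - c) + norm (c - d) + norm (d - b)"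
proof -
  have "a - b = (a - c) + ((c - d) + (d - b))" by simp
  hence "norm (a - b) \<le> norm (a - c) + norm ((c - d) + (d - b))" using norm_triangle_ineq[of "a - c" "(c - d) + (d - b)"] by simp
  also have "norm ((c - d) + (d - b)) \<le> norm (c - d) + norm (d - b)" by (rule norm_triangle_ineq)
  finally show ?thesis by simp
qed

lemma lip_le:
  assumes "C-lipschitz_on N T" "x \<in> N" "y \<in> N" "x \<noteq> y"
  shows "dist (T x) (T y) \<le> lip_const N T * dist x y"
proof -
  define R where "R = {dist (T x) (T y) / dist x y | x y. x \<in> N \<and> y \<in> N \<and> x \<noteq> y}"
  have mem: "dist (T x) (T y) / dist x y \<in> R" using assms unfolding R_def by blast
  have bdd: "bdd_above R"
  proof (rule bdd_aboveI)
    fix r assume "r \<in> R"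
    then obtain u v where uv: "r = dist (T u) (T v) / dist u v" "u \<in> N" "v \<in> N" "u \<noteq> v"
      unfolding R_def by blast
    hence "dist (T u) (T v) \<le> C * dist u v" using assms(1) unfolding lipschitz_on_def by blast
    thus "r \<le> C" using uv by (simp add: pos_divide_le_eq)
  qed
  have "lip_const N T = Sup R" using mem unfolding lip_const_def R_def Let_def by auto
  hence "dist (T x) (T y) / dist x y \<le> lip_const N T" using cSup_upper[OF mem bdd] by simp
  thus ?thesis using assms(4) by (simp add: divide_simps)
qed

lemma lip_nonneg:
  assumes "C-lipschitz_on N T"
  shows "lip_const N T \<ge> 0"
proof (cases "\<exists>x\<in>N. \<exists>y\<in>N. x \<noteq> y")
  case True
  then obtain x y where "x \<in> N" "y \<in> N" "x \<noteq> y" by blast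
  note l = lip_le[OF assms this]
  have "0 \<le> lip_const N T * dist x y" using l zero_le_dist[of "T x" "T y"] by linarith
  moreover have "dist x y > 0" using \<open>x \<noteq> y\<close> by simp
  ultimately show ?thesis by (simp add: zero_le_mult_iff)
next
  case False
  thus ?thesis unfolding lip_const_def Let_def by auto
qed

theorem fact2:
  fixes M :: real
  assumes "M > 0"
    and "net_distance (UNIV :: 'a::banach set) (UNIV :: 'b::banach set) < ereal (M\<^sup>2)"
  shows "\<exists>L\<ge>0. \<exists>T :: 'a \<Rightarrow> 'b. bij T \<and> coarse_quasi_isometry M L T UNIV UNIV"
proof -
  obtain NE :: "'a set" and NF :: "'b set" and T where
    nE: "is_net UNIV NE" and nF: "is_net UNIV NF" and T: "bij_betw T NE NF"
    and LT: "\<exists>C. C-lipschitz_on NE T" and LTi: "\<exists>C. C-lipschitz_on NF (inv_into NE T)"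
    and prod: "lip_const NE T * lip_const NF (inv_into NE T) < M\<^sup>2"
  proof -
    have "\<exists>x\<in>{ereal (lip_const NE T * lip_const NF (inv_into NE T)) | NE NF T.
      is_net (UNIV::'a set) NE \<and> is_net (UNIV::'b set) NF \<and> bij_betw T NE NF \<and>
      (\<exists>C. C-lipschitz_on NE T) \<and> (\<exists>C. C-lipschitz_on NF (inv_into NE T))}. x < ereal (M\<^sup>2)"
      using assms(2) unfolding net_distance_def Inf_less_iff .
    then obtain NE :: "'a set" and NF :: "'b set" and T where
      "is_net UNIV NE" "is_net UNIV NF" "bij_betw T NE NF"
      "\<exists>C. C-lipschitz_on NE T" "\<exists>C. C-lipschitz_on NF (inv_into NE T)"
      "ereal (lip_const NE T * lip_const NF (inv_into NE T)) < ereal (M\<^sup>2)"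
      by blast
    thus ?thesis using that by simp
  qed
  define Ti where "Ti = inv_into NE T"
  define a where "a = lip_const NE T"
  define b where "b = lip_const NF Ti"
  obtain Ca where Ca: "Ca-lipschitz_on NE T" using LT by blast
  obtain Cb where Cb: "Cb-lipschitz_on NF Ti" using LTi unfolding Ti_def by blast
  have a0: "a \<ge> 0" unfolding a_def by (rule lip_nonneg[OF Ca])
  have b0: "b \<ge> 0" unfolding b_def by (rule lip_nonneg[OF Cb])
  have ab: "a * b < M\<^sup>2" using prod unfolding a_def b_def Ti_def .
  obtain \<epsilon>E \<delta>E where eE: "\<epsilon>E > 0" "\<delta>E > 0" and NEn: "is_net_eps_delta UNIV \<epsilon>E \<delta>E NE"
    using nE unfolding is_net_def by blast
  obtain \<epsilon>F \<delta>F where eF: "\<epsilon>F > 0" "\<delta>F > 0" and NFn: "is_net_eps_delta UNIV \<epsilon>F \<delta>F NF"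
    using nF unfolding is_net_def by blast
  define \<eta> where "\<eta> = min 1 ((M\<^sup>2 - a * b) / (a + b + 1))"
  have \<eta>: "\<eta> > 0" "\<eta> \<le> 1" "\<eta> * (a + b + 1) \<le> M\<^sup>2 - a * b"
  proof -
    define q where "q = (M\<^sup>2 - a * b) / (a + b + 1)"
    have d: "a + b + 1 > 0" using a0 b0 by simp
    have q: "q > 0" unfolding q_def using ab d by simp
    have qq: "q * (a + b + 1) = M\<^sup>2 - a * b" unfolding q_def using d by simp
    have e: "\<eta> = min 1 q" unfolding \<eta>_def q_def ..
    have "\<eta> * (a + b + 1) \<le> q * (a + b + 1)" using d e by (intro mult_right_mono) auto
    thus "\<eta> > 0" "\<eta> \<le> 1" "\<eta> * (a + b + 1) \<le> M\<^sup>2 - a * b" using q qq e by auto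
  qed
  define a' where "a' = a + \<eta>"
  define b' where "b' = b + \<eta>"
  have a'p: "a' > 0" and b'p: "b' > 0" using a0 b0 \<eta> unfolding a'_def b'_def by auto
  have "a' * b' = a * b + \<eta> * (a + b) + \<eta> * \<eta>" unfolding a'_def b'_def by (simp add: algebra_simps)
  also have "\<dots> \<le> a * b + \<eta> * (a + b + 1)" using \<eta> by (simp add: algebra_simps mult_left_le)
  finally have a'b': "a' * b' \<le> M\<^sup>2" using \<eta> by simp
  define c where "c = sqrt (b' / a')"
  have cp: "c > 0" using a'p b'p unfolding c_def by simp
  have c2: "c\<^sup>2 = b' / a'" unfolding c_def using a'p b'p by simp
  have "(c * a')\<^sup>2 = c\<^sup>2 * a'\<^sup>2" by (simp add: power_mult_distrib)
  also have "\<dots> = b' / a' * a'\<^sup>2" using c2 by simp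
  also have "\<dots> = a' * b'" using a'p by (simp add: power2_eq_square field_simps)
  finally have "(c * a')\<^sup>2 = a' * b'" .
  hence ca: "c * a' \<le> M" using a'b' assms(1) cp a'p
    by (metis less_eq_real_def mult_pos_pos power2_le_imp_le)
  have "(b' / c)\<^sup>2 = b'\<^sup>2 / c\<^sup>2" by (simp add: power_divide)
  also have "\<dots> = b'\<^sup>2 / (b' / a')" using c2 by simp
  also have "\<dots> = a' * b'" using a'p b'p by (simp add: power2_eq_square field_simps)
  finally have "(b' / c)\<^sup>2 = a' * b'" .
  hence bc: "b' / c \<le> M" using a'b' assms(1) cp b'p
    by (metis less_eq_real_def divide_pos_pos power2_le_imp_le)
  define S where "S x = c *\<^sub>R T x" for x
  have TN: "T x \<in> NF" if "x \<in> NE" for x using bij_betwE[OF T] that by blast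
  have Tinj: "inj_on T NE" using T by (rule bij_betw_imp_inj_on)
  have NEd: "\<forall>x. \<exists>n\<in>NE. dist x n < \<epsilon>E" and NEs: "\<forall>n\<in>NE. \<forall>m\<in>NE. n \<noteq> m \<longrightarrow> dist n m \<ge> \<delta>E"
    using NEn unfolding is_net_eps_delta_def by auto
  have NFd: "\<forall>x. \<exists>n\<in>NF. dist x n < \<epsilon>F" and NFs: "\<forall>n\<in>NF. \<forall>m\<in>NF. n \<noteq> m \<longrightarrow> dist n m \<ge> \<delta>F"
    using NFn unfolding is_net_eps_delta_def by auto
  have TiT: "Ti (T x) = x" if "x \<in> NE" for x
    using T that unfolding Ti_def bij_betw_def by (simp add: inv_into_f_f)
  have Up: "norm (S x - S y) \<le> M * norm (x - y)" if "x \<in> NE" "y \<in> NE" for x y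
  proof (cases "x = y")
    case False
    have "dist (T x) (T y) \<le> a * dist x y" using lip_le[OF Ca that False] unfolding a_def .
    also have "\<dots> \<le> a' * dist x y" unfolding a'_def using \<eta> by (simp add: mult_right_mono)
    finally have "norm (T x - T y) \<le> a' * norm (x - y)" by (simp add: dist_norm)
    hence "c * norm (T x - T y) \<le> c * a' * norm (x - y)" using cp by (simp add: mult_left_mono mult.assoc)
    also have "\<dots> \<le> M * norm (x - y)" using ca by (simp add: mult_right_mono)
    finally show ?thesis unfolding S_def using cp by (simp add: scaleR_diff_right[symmetric])
  qed simp
  have Lo: "norm (x - y) \<le> M * norm (S x - S y)" if "x \<in> NE" "y \<in> NE" for x y
  proof (cases "x = y")
    case False
    have ne: "T x \<noteq> T y" using False inj_onD[OF Tinj _ that] by blast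
    have "dist x y = dist (Ti (T x)) (Ti (T y))" using TiT that by simp
    also have "\<dots> \<le> b * dist (T x) (T y)" using lip_le[OF Cb TN[OF that(1)] TN[OF that(2)] ne]
      unfolding b_def .
    also have "\<dots> \<le> b' * dist (T x) (T y)" unfolding b'_def using \<eta> by (simp add: mult_right_mono)
    finally have 1: "norm (x - y) \<le> b' * norm (T x - T y)" by (simp add: dist_norm)
    have "b' * norm (T x - T y) = (b' / c) * (c * norm (T x - T y))" using cp by simp
    also have "\<dots> \<le> M * (c * norm (T x - T y))" by (rule mult_right_mono[OF bc]) (use cp in simp)
    also have "c * norm (T x - T y) = norm (S x - S y)"
      unfolding S_def using cp by (simp add: scaleR_diff_right[symmetric])
    finally show ?thesis using 1 by simp
  qed simp
  define NF' where "NF' = (\<lambda>u. c *\<^sub>R u) ` NF"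
  have NF'n: "is_net_eps_delta UNIV (c * \<epsilon>F) (c * \<delta>F) NF'"
    unfolding is_net_eps_delta_def
  proof (intro conjI ballI impI)
    show "NF' \<subseteq> UNIV" by simp
  next
    fix y :: 'b
    obtain m where m: "m \<in> NF" "dist (y /\<^sub>R c) m < \<epsilon>F"
      using NFd by blast
    have "y - c *\<^sub>R m = c *\<^sub>R (y /\<^sub>R c - m)" using cp by (simp add: algebra_simps)
    hence "dist y (c *\<^sub>R m) = c * dist (y /\<^sub>R c) m"
      using cp by (simp add: dist_norm)
    hence "dist y (c *\<^sub>R m) < c * \<epsilon>F" using m cp by simp
    thus "\<exists>n\<in>NF'. dist y n < c * \<epsilon>F" using m unfolding NF'_def by blast
  next
    fix n m assume "n \<in> NF'" "m \<in> NF'" "n \<noteq> m"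
    then obtain u v where uv: "n = c *\<^sub>R u" "m = c *\<^sub>R v" "u \<in> NF" "v \<in> NF" "u \<noteq> v"
      unfolding NF'_def by auto
    hence "dist u v \<ge> \<delta>F" using NFs by blast
    moreover have "dist n m = c * dist u v"
      using cp uv by (simp add: dist_norm scaleR_diff_right[symmetric])
    ultimately show "dist n m \<ge> c * \<delta>F" using cp by simp
  qed
  obtain \<pi>E \<rho>E where pE: "\<rho>E > 0" "\<forall>x. \<pi>E x \<in> NE \<and> dist x (\<pi>E x) < \<epsilon>E"
      "\<forall>n\<in>NE. \<forall>x. dist x n < \<rho>E \<longrightarrow> \<pi>E x = n"
    using cells[OF NEn eE] by blast
  obtain \<pi>F \<rho>F where pF: "\<rho>F > 0" "\<forall>x. \<pi>F x \<in> NF' \<and> dist x (\<pi>F x) < c * \<epsilon>F"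
      "\<forall>n\<in>NF'. \<forall>x. dist x n < \<rho>F \<longrightarrow> \<pi>F x = n"
  proof -
    have "c * \<epsilon>F > 0" "c * \<delta>F > 0" using eF cp by simp_all
    from cells[OF NF'n this] show ?thesis using that by blast
  qed
  obtain f :: "'a \<Rightarrow> 'b" where f: "inj f"
    using inj_between[OF NEd NFs eF(2) T] by blast
  obtain g :: "'b \<Rightarrow> 'a" where g: "inj g"
    using inj_between[OF NFd NEs eE(2) bij_betw_inv_into[OF T]] by blast
  have SN: "S n \<in> NF'" if "n \<in> NE" for n using TN[OF that] unfolding S_def NF'_def by blast
  have "\<forall>n\<in>NE. \<exists>\<beta>. bij_betw \<beta> {x. \<pi>E x = n} {y. \<pi>F y = S n}"
  proof
    fix n assume n: "n \<in> NE"
    show "\<exists>\<beta>. bij_betw \<beta> {x. \<pi>E x = n} {y. \<pi>F y = S n}"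
    proof (rule cell_bij[OF _ pE(1) _ pF(1) f g])
      show "ball n \<rho>E \<subseteq> {x. \<pi>E x = n}" using pE(3) n by (auto simp: dist_commute)
      show "ball (S n) \<rho>F \<subseteq> {y. \<pi>F y = S n}" using pF(3) SN[OF n] by (auto simp: dist_commute)
    qed
  qed
  from bchoice[OF this] obtain \<beta> where \<beta>: "\<forall>n\<in>NE. bij_betw (\<beta> n) {x. \<pi>E x = n} {y. \<pi>F y = S n}"
    by blast
  define h where "h x = \<beta> (\<pi>E x) x" for x
  have hc: "\<pi>F (h x) = S (\<pi>E x)" for x
  proof -
    have "bij_betw (\<beta> (\<pi>E x)) {z. \<pi>E z = \<pi>E x} {y. \<pi>F y = S (\<pi>E x)}" using \<beta> pE(2) by blast
    from bij_betwE[OF this] show ?thesis unfolding h_def by simp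
  qed
  have Sinj: "inj_on S NE"
  proof (rule inj_onI)
    fix x y assume xy: "x \<in> NE" "y \<in> NE" "S x = S y"
    hence "T x = T y" using cp unfolding S_def by simp
    thus "x = y" using inj_onD[OF Tinj _ xy(1,2)] by blast
  qed
  have "inj h"
  proof (rule injI)
    fix x y assume e: "h x = h y"
    have "S (\<pi>E x) = S (\<pi>E y)" using hc[of x] hc[of y] e by metis
    hence pe: "\<pi>E x = \<pi>E y" using inj_onD[OF Sinj _ conjunct1[OF pE(2)[rule_format, of x]] conjunct1[OF pE(2)[rule_format, of y]]] by blast
    have xin: "\<pi>E x \<in> NE" using pE(2) by blast
    have "inj_on (\<beta> (\<pi>E x)) {z. \<pi>E z = \<pi>E x}" using bij_betw_imp_inj_on \<beta> xin by blast
    moreover have "\<beta> (\<pi>E x) x = \<beta> (\<pi>E x) y" using e pe unfolding h_def by simp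
    ultimately show "x = y" by (rule inj_onD) (use pe in auto)
  qed
  moreover have "surj h"
  proof -
    have "y \<in> range h" for y
    proof -
      have "\<pi>F y \<in> NF'" using pF(2) by blast
      then obtain u where u: "u \<in> NF" "\<pi>F y = c *\<^sub>R u" unfolding NF'_def by blast
      obtain n where n: "n \<in> NE" "u = T n" using bij_betw_imp_surj_on[OF T] u(1) by blast
      have "y \<in> {y. \<pi>F y = S n}" using u n unfolding S_def by simp
      moreover have "\<beta> n ` {x. \<pi>E x = n} = {y. \<pi>F y = S n}" using \<beta> n(1) bij_betw_imp_surj_on by blast
      ultimately have "y \<in> \<beta> n ` {x. \<pi>E x = n}" by simp
      then obtain x where x: "x \<in> {x. \<pi>E x = n}" "y = \<beta> n x" by (rule imageE)
      hence "h x = y" unfolding h_def by simp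
      thus ?thesis by (rule range_eqI[OF sym])
    qed
    thus ?thesis by auto
  qed
  ultimately have bh: "bij h" by (simp add: bij_def)
  have dE: "norm (x - \<pi>E x) < \<epsilon>E" for x using pE(2) by (simp add: dist_norm)
  have dF: "norm (h x - S (\<pi>E x)) < c * \<epsilon>F" for x using pF(2) hc[of x] by (metis dist_norm)
  define L where "L = 2 * M * \<epsilon>E + 2 * c * \<epsilon>F + 2 * \<epsilon>E / M"
  have L0: "L \<ge> 0" unfolding L_def using assms(1) eE eF cp by simp
  have upper: "norm (h x - h y) \<le> M * norm (x - y) + L" for x y
  proof -
    have "norm (h x - h y) \<le> norm (h x - S (\<pi>E x)) + norm (S (\<pi>E x) - S (\<pi>E y)) + norm (S (\<pi>E y) - h y)"
      by (rule tri3)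
    moreover have "norm (S (\<pi>E x) - S (\<pi>E y)) \<le> M * norm (\<pi>E x - \<pi>E y)" using Up pE(2) by blast
    moreover have "norm (\<pi>E x - \<pi>E y) \<le> norm (\<pi>E x - x) + norm (x - y) + norm (y - \<pi>E y)" by (rule tri3)
    moreover have "norm (\<pi>E x - x) < \<epsilon>E" using dE[of x] by (simp add: norm_minus_commute)
    moreover have "norm (S (\<pi>E y) - h y) < c * \<epsilon>F" using dF[of y] by (simp add: norm_minus_commute)
    moreover note dE[of y] dF[of x]
    ultimately have A: "norm (\<pi>E x - \<pi>E y) \<le> \<epsilon>E + norm (x - y) + \<epsilon>E"
      and B: "norm (h x - h y) \<le> M * norm (\<pi>E x - \<pi>E y) + 2 * c * \<epsilon>F" by (simp_all add: norm_minus_commute)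
    have "M * norm (\<pi>E x - \<pi>E y) \<le> M * (\<epsilon>E + norm (x - y) + \<epsilon>E)"
      using A assms(1) by (simp add: mult_left_mono)
    hence "norm (h x - h y) \<le> M * (\<epsilon>E + norm (x - y) + \<epsilon>E) + 2 * c * \<epsilon>F" using B by linarith
    moreover have "M * (\<epsilon>E + norm (x - y) + \<epsilon>E) = M * norm (x - y) + 2 * M * \<epsilon>E" by (simp add: algebra_simps)
    moreover have "2 * \<epsilon>E / M \<ge> 0" using assms(1) eE by simp
    ultimately show ?thesis unfolding L_def by linarith
  qed
  have lower: "(1/M) * norm (x - y) - L \<le> norm (h x - h y)" for x y
  proof -
    have "norm (x - y) \<le> norm (x - \<pi>E x) + norm (\<pi>E x - \<pi>E y) + norm (\<pi>E y - y)" by (rule tri3)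
    moreover have "norm (\<pi>E x - \<pi>E y) \<le> M * norm (S (\<pi>E x) - S (\<pi>E y))" using Lo pE(2) by blast
    moreover have "norm (S (\<pi>E x) - S (\<pi>E y)) \<le> norm (S (\<pi>E x) - h x) + norm (h x - h y) + norm (h y - S (\<pi>E y))"
      by (rule tri3)
    moreover have "norm (S (\<pi>E x) - h x) < c * \<epsilon>F" using dF[of x] by (simp add: norm_minus_commute)
    moreover have "norm (\<pi>E y - y) < \<epsilon>E" using dE[of y] by (simp add: norm_minus_commute)
    moreover note dE[of x] dF[of y]
    ultimately have A: "norm (S (\<pi>E x) - S (\<pi>E y)) \<le> norm (h x - h y) + 2 * c * \<epsilon>F"
      and B: "norm (x - y) \<le> M * norm (S (\<pi>E x) - S (\<pi>E y)) + 2 * \<epsilon>E" by (simp_all add: norm_minus_commute)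
    have "M * norm (S (\<pi>E x) - S (\<pi>E y)) \<le> M * (norm (h x - h y) + 2 * c * \<epsilon>F)"
      using A assms(1) by (simp add: mult_left_mono)
    hence "norm (x - y) \<le> M * (norm (h x - h y) + 2 * c * \<epsilon>F) + 2 * \<epsilon>E" using B by linarith
    hence "(1/M) * norm (x - y) \<le> norm (h x - h y) + 2 * c * \<epsilon>F + 2 * \<epsilon>E / M"
      using assms(1) by (simp add: divide_simps algebra_simps)
    moreover have "M * \<epsilon>E \<ge> 0" using assms(1) eE by simp
    ultimately show ?thesis unfolding L_def by linarith
  qed
  have dens: "\<exists>\<xi>>0. \<forall>y\<in>(UNIV::'b set). \<exists>x\<in>(UNIV::'a set). dist y (h x) \<le> \<xi>"
  proof (intro exI[of _ 1] conjI ballI)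
    fix y :: 'b
    obtain x where "y = h x" using bh unfolding bij_def surj_def by blast
    hence "dist y (h x) \<le> 1" by simp
    thus "\<exists>x\<in>(UNIV::'a set). dist y (h x) \<le> 1" by blast
  qed simp
  have "coarse_quasi_isometry M L h UNIV UNIV"
    unfolding coarse_quasi_isometry_def using upper lower dens by auto
  thus ?thesis using L0 bh by blast
qed

end
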